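(* Let $A$ be a commutative ring with $1\ne0$. The valuation divisibilities on $A$ correspond one-to-one to the Bourbaki valuations of $A$ (up to equivalence), via $v\mapsto |^v$ where $a|^vb\Leftrightarrow v(a)\le v(b)$; moreover $I(|^v)=v^{-1}(\infty)$.
   Context: A divisibility on $A$ is a binary relation $|\subseteq A\times A$ such that for all $a,b,c$: (1) $a|a$; (2) $a|b,\ b|c\Rightarrow a|c$; (3) $a|b,\ a|c\Rightarrow a|b-c$; (4) $a|b\Rightarrow ac|bc$; (5) $0\nmid1$. Support $I(|)=\{a;\ 0|a\}$. $|$ is total if $a|b$ or $b|a$ for all $a,b$; it has cancellation if $0\nmid c$ and $ac|bc$ imply $a|b$; it is a valuation divisibility if it is total and has cancellation. A Bourbaki valuation on $A$ is a map $v:A\to\Gamma\cup\{\infty\}$, $\Gamma$ an ordered abelian group, such that $I=v^{-1}(\infty)$ is a prime ideal of $A$ and there is a field valuation $\bar v$ on $\mathrm{Quot}(A/I)$ with $v(a)=\bar v(a+I)$ for all $a\in A$. Two Bourbaki valuations are equivalent if they have the same $v^{-1}(\infty)$ and their induced field valuations have the same valuation ring. *)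

theory Defs
  imports Main
begin

definition divisibility :: "('a::comm_ring_1 \<Rightarrow> 'a \<Rightarrow> bool) \<Rightarrow> bool" where
  "divisibility R \<longleftrightarrow>
     (\<forall>a. R a a) \<and>
     (\<forall>a b c. R a b \<longrightarrow> R b c \<longrightarrow> R a c) \<and>
     (\<forall>a b c. R a b \<longrightarrow> R a c \<longrightarrow> R a (b - c)) \<and>
     (\<forall>a b c. R a b \<longrightarrow> R (a * c) (b * c)) \<and>
     \<not> R 0 1"

definition div_support :: "('a::comm_ring_1 \<Rightarrow> 'a \<Rightarrow> bool) \<Rightarrow> 'a set" where
  "div_support R = {a. R 0 a}"

definition div_total :: "('a \<Rightarrow> 'a \<Rightarrow> bool) \<Rightarrow> bool" where
  "div_total R \<longleftrightarrow> (\<forall>a b. R a b \<or> R b a)"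

definition div_cancellation :: "('a::comm_ring_1 \<Rightarrow> 'a \<Rightarrow> bool) \<Rightarrow> bool" where
  "div_cancellation R \<longleftrightarrow> (\<forall>a b c. \<not> R 0 c \<longrightarrow> R (a * c) (b * c) \<longrightarrow> R a b)"

definition valuation_divisibility :: "('a::comm_ring_1 \<Rightarrow> 'a \<Rightarrow> bool) \<Rightarrow> bool" where
  "valuation_divisibility R \<longleftrightarrow> divisibility R \<and> div_total R \<and> div_cancellation R"

section \<open>Ordered abelian groups (explicit structures, so the value type may vary)\<close>

record 'g ogroup =
  gcar  :: "'g set"
  gadd  :: "'g \<Rightarrow> 'g \<Rightarrow> 'g"
  gzero :: "'g"
  gneg  :: "'g \<Rightarrow> 'g"
  gle   :: "'g \<Rightarrow> 'g \<Rightarrow> bool"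

definition ordered_ab_group :: "('g, 'm) ogroup_scheme \<Rightarrow> bool" where
  "ordered_ab_group G \<longleftrightarrow>
     gzero G \<in> gcar G \<and>
     (\<forall>x\<in>gcar G. \<forall>y\<in>gcar G. gadd G x y \<in> gcar G) \<and>
     (\<forall>x\<in>gcar G. gneg G x \<in> gcar G) \<and>
     (\<forall>x\<in>gcar G. \<forall>y\<in>gcar G. \<forall>z\<in>gcar G. gadd G (gadd G x y) z = gadd G x (gadd G y z)) \<and>
     (\<forall>x\<in>gcar G. \<forall>y\<in>gcar G. gadd G x y = gadd G y x) \<and>
     (\<forall>x\<in>gcar G. gadd G (gzero G) x = x) \<and>
     (\<forall>x\<in>gcar G. gadd G (gneg G x) x = gzero G) \<and>
     (\<forall>x\<in>gcar G. gle G x x) \<and>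
     (\<forall>x\<in>gcar G. \<forall>y\<in>gcar G. \<forall>z\<in>gcar G. gle G x y \<longrightarrow> gle G y z \<longrightarrow> gle G x z) \<and>
     (\<forall>x\<in>gcar G. \<forall>y\<in>gcar G. gle G x y \<longrightarrow> gle G y x \<longrightarrow> x = y) \<and>
     (\<forall>x\<in>gcar G. \<forall>y\<in>gcar G. gle G x y \<or> gle G y x) \<and>
     (\<forall>x\<in>gcar G. \<forall>y\<in>gcar G. \<forall>z\<in>gcar G. gle G x y \<longrightarrow> gle G (gadd G x z) (gadd G y z))"

text \<open>\<Gamma> \<union> {\<infinity>} is represented by the type g option, with None = \<infinity>.\<close>

definition vle :: "('g, 'm) ogroup_scheme \<Rightarrow> 'g option \<Rightarrow> 'g option \<Rightarrow> bool" where
  "vle G x y = (case y of None \<Rightarrow> True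
                 | Some b \<Rightarrow> (case x of None \<Rightarrow> False | Some a \<Rightarrow> gle G a b))"

definition vadd :: "('g, 'm) ogroup_scheme \<Rightarrow> 'g option \<Rightarrow> 'g option \<Rightarrow> 'g option" where
  "vadd G x y = (case x of None \<Rightarrow> None
                 | Some a \<Rightarrow> (case y of None \<Rightarrow> None | Some b \<Rightarrow> Some (gadd G a b)))"

definition vmin :: "('g, 'm) ogroup_scheme \<Rightarrow> 'g option \<Rightarrow> 'g option \<Rightarrow> 'g option" where
  "vmin G x y = (if vle G x y then x else y)"

definition in_gamma_inf :: "('g, 'm) ogroup_scheme \<Rightarrow> 'g option \<Rightarrow> bool" where
  "in_gamma_inf G x \<longleftrightarrow> x = None \<or> the x \<in> gcar G"

definition prime_ideal :: "'a::comm_ring_1 set \<Rightarrow> bool" where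
  "prime_ideal I \<longleftrightarrow>
     0 \<in> I \<and> (\<forall>a\<in>I. \<forall>b\<in>I. a - b \<in> I) \<and> (\<forall>a\<in>I. \<forall>r. r * a \<in> I) \<and>
     1 \<notin> I \<and> (\<forall>a b. a * b \<in> I \<longrightarrow> a \<in> I \<or> b \<in> I)"

text \<open>Elements of Quot(A/I) are classes of fractions a/s with s \<notin> I, where
  a/s = b/t iff a t - b s \<in> I.\<close>

definition frac_rel :: "'a::comm_ring_1 set \<Rightarrow> (('a \<times> 'a) \<times> ('a \<times> 'a)) set" where
  "frac_rel I = {((a, s), (b, t)). s \<notin> I \<and> t \<notin> I \<and> a * t - b * s \<in> I}"

definition frac_field :: "'a::comm_ring_1 set \<Rightarrow> ('a \<times> 'a) set set" where
  "frac_field I = {(a, s). s \<notin> I} // frac_rel I"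

definition frac :: "'a::comm_ring_1 set \<Rightarrow> 'a \<Rightarrow> 'a \<Rightarrow> ('a \<times> 'a) set" where
  "frac I a s = frac_rel I `` {(a, s)}"

definition frac_add :: "'a::comm_ring_1 set \<Rightarrow> ('a \<times> 'a) set \<Rightarrow> ('a \<times> 'a) set \<Rightarrow> ('a \<times> 'a) set" where
  "frac_add I X Y = (\<Union>p\<in>X. \<Union>q\<in>Y. frac I (fst p * snd q + fst q * snd p) (snd p * snd q))"

definition frac_mult :: "'a::comm_ring_1 set \<Rightarrow> ('a \<times> 'a) set \<Rightarrow> ('a \<times> 'a) set \<Rightarrow> ('a \<times> 'a) set" where
  "frac_mult I X Y = (\<Union>p\<in>X. \<Union>q\<in>Y. frac I (fst p * fst q) (snd p * snd q))"

definition frac_field_valuation ::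
  "'a::comm_ring_1 set \<Rightarrow> ('g, 'm) ogroup_scheme \<Rightarrow> (('a \<times> 'a) set \<Rightarrow> 'g option) \<Rightarrow> bool" where
  "frac_field_valuation I G w \<longleftrightarrow>
     (\<forall>x\<in>frac_field I. in_gamma_inf G (w x)) \<and>
     (\<forall>x\<in>frac_field I. w x = None \<longleftrightarrow> x = frac I 0 1) \<and>
     (\<forall>x\<in>frac_field I. \<forall>y\<in>frac_field I. w (frac_mult I x y) = vadd G (w x) (w y)) \<and>
     (\<forall>x\<in>frac_field I. \<forall>y\<in>frac_field I. vle G (vmin G (w x) (w y)) (w (frac_add I x y)))"

definition inf_set :: "('a \<Rightarrow> 'g option) \<Rightarrow> 'a set" where
  "inf_set v = {a. v a = None}"

definition induced_field_valuation ::
  "('g, 'm) ogroup_scheme \<Rightarrow> ('a::comm_ring_1 \<Rightarrow> 'g option) \<Rightarrow> (('a \<times> 'a) set \<Rightarrow> 'g option) \<Rightarrow> bool" where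
  "induced_field_valuation G v w \<longleftrightarrow>
     frac_field_valuation (inf_set v) G w \<and> (\<forall>a. v a = w (frac (inf_set v) a 1))"

definition bourbaki_valuation ::
  "('g, 'm) ogroup_scheme \<Rightarrow> ('a::comm_ring_1 \<Rightarrow> 'g option) \<Rightarrow> bool" where
  "bourbaki_valuation G v \<longleftrightarrow>
     ordered_ab_group G \<and> (\<forall>a. in_gamma_inf G (v a)) \<and>
     prime_ideal (inf_set v) \<and> (\<exists>w. induced_field_valuation G v w)"

definition field_valuation_ring ::
  "'a::comm_ring_1 set \<Rightarrow> ('g, 'm) ogroup_scheme \<Rightarrow> (('a \<times> 'a) set \<Rightarrow> 'g option) \<Rightarrow> ('a \<times> 'a) set set" where
  "field_valuation_ring I G w = {x \<in> frac_field I. vle G (Some (gzero G)) (w x)}"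

definition bourbaki_equiv ::
  "('g, 'm) ogroup_scheme \<Rightarrow> ('a::comm_ring_1 \<Rightarrow> 'g option) \<Rightarrow>
   ('h, 'n) ogroup_scheme \<Rightarrow> ('a \<Rightarrow> 'h option) \<Rightarrow> bool" where
  "bourbaki_equiv G1 v1 G2 v2 \<longleftrightarrow>
     inf_set v1 = inf_set v2 \<and>
     (\<exists>w1 w2. induced_field_valuation G1 v1 w1 \<and> induced_field_valuation G2 v2 w2 \<and>
        field_valuation_ring (inf_set v1) G1 w1 = field_valuation_ring (inf_set v2) G2 w2)"

definition val_div :: "('g, 'm) ogroup_scheme \<Rightarrow> ('a \<Rightarrow> 'g option) \<Rightarrow> 'a \<Rightarrow> 'a \<Rightarrow> bool" where
  "val_div G v a b \<longleftrightarrow> vle G (v a) (v b)"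

end

theory Submission
  imports Defs
begin


section \<open>Prime ideals\<close>

context fixes I :: "'a::comm_ring_1 set" assumes PI: "prime_ideal I"
begin
lemma pi_zero: "0 \<in> I" using PI by (simp add: prime_ideal_def)
lemma pi_diff: "a \<in> I \<Longrightarrow> b \<in> I \<Longrightarrow> a - b \<in> I" using PI by (simp add: prime_ideal_def)
lemma pi_multl: "a \<in> I \<Longrightarrow> r * a \<in> I" using PI by (simp add: prime_ideal_def)
lemma pi_multr: "a \<in> I \<Longrightarrow> a * r \<in> I" using pi_multl[of a r] by (simp add: mult.commute)
lemma pi_neg: "a \<in> I \<Longrightarrow> - a \<in> I" using pi_diff[OF pi_zero, of a] by simp
lemma pi_add: "a \<in> I \<Longrightarrow> b \<in> I \<Longrightarrow> a + b \<in> I" using pi_diff[of a "-b"] pi_neg[of b] by simp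
lemma pi_swap: "x - y \<in> I \<Longrightarrow> y - x \<in> I" using pi_neg[of "x - y"] by (simp only: minus_diff_eq)
lemma pi_one: "1 \<notin> I" using PI by (simp add: prime_ideal_def)
lemma pi_prime: "a * b \<in> I \<Longrightarrow> a \<in> I \<or> b \<in> I" using PI by (simp add: prime_ideal_def)
lemma pi_nprod: "a \<notin> I \<Longrightarrow> b \<notin> I \<Longrightarrow> a * b \<notin> I" using pi_prime by blast
lemma pi_eq: "x = y \<Longrightarrow> y \<in> I \<Longrightarrow> x \<in> I" by simp

definition fdom :: "('a \<times> 'a) set" where "fdom = {(a,s). s \<notin> I}"

lemma frac_rel_iff: "((a,s),(b,t)) \<in> frac_rel I \<longleftrightarrow> s \<notin> I \<and> t \<notin> I \<and> a*t - b*s \<in> I"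
  by (simp add: frac_rel_def)

lemma frac_equiv: "equiv fdom (frac_rel I)"
proof (rule equivI)
  show "frac_rel I \<subseteq> fdom \<times> fdom" by (auto simp: frac_rel_def fdom_def)
  show "refl_on fdom (frac_rel I)" by (auto simp: refl_on_def frac_rel_def fdom_def pi_zero)
  show "sym (frac_rel I)"
  proof (rule symI)
    fix x y assume "(x,y) \<in> frac_rel I"
    then obtain a s b t where xy: "x = (a,s)" "y = (b,t)" and h: "s \<notin> I" "t \<notin> I" "a*t - b*s \<in> I"
      by (cases x, cases y, auto simp: frac_rel_def)
    have "b*s - a*t \<in> I" using pi_neg[OF h(3)] by (simp only: minus_diff_eq)
    then show "(y,x) \<in> frac_rel I" using h unfolding xy frac_rel_iff by blast
  qed
  show "trans (frac_rel I)"
  proof (rule transI)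
    fix x y z assume "(x,y) \<in> frac_rel I" "(y,z) \<in> frac_rel I"
    then obtain a s b t c u where xyz: "x = (a,s)" "y = (b,t)" "z = (c,u)"
      and h: "s \<notin> I" "t \<notin> I" "u \<notin> I" "a*t - b*s \<in> I" "b*u - c*t \<in> I"
      by (cases x, cases y, cases z, auto simp: frac_rel_def)
    have "t * (a*u - c*s) = u*(a*t - b*s) + s*(b*u - c*t)" by (simp add: algebra_simps)
    also have "\<dots> \<in> I" using h by (intro pi_add pi_multl)
    finally have "a*u - c*s \<in> I" using pi_prime h(2) by blast
    then show "(x,z) \<in> frac_rel I" using h unfolding xyz frac_rel_iff by blast
  qed
qed

lemma frac_self: "s \<notin> I \<Longrightarrow> (a,s) \<in> frac I a s"
  using equiv_class_self[OF frac_equiv, of "(a,s)"] by (simp add: frac_def fdom_def)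

lemma frac_eq: "s \<notin> I \<Longrightarrow> t \<notin> I \<Longrightarrow> frac I a s = frac I b t \<longleftrightarrow> a*t - b*s \<in> I"
  using eq_equiv_class_iff[OF frac_equiv, of "(a,s)" "(b,t)"] by (simp add: frac_def fdom_def frac_rel_def)

lemma frac_in_field: "s \<notin> I \<Longrightarrow> frac I a s \<in> frac_field I"
  unfolding frac_field_def frac_def by (rule quotientI) simp

lemma frac_fieldE:
  assumes "X \<in> frac_field I"
  obtains a s where "s \<notin> I" "X = frac I a s"
  using assms unfolding frac_field_def frac_def by (auto elim!: quotientE)

lemma frac_mem: "p \<in> frac I a s \<Longrightarrow> snd p \<notin> I \<and> frac I (fst p) (snd p) = frac I a s"
proof -
  assume "p \<in> frac I a s"
  then have r: "((a,s),p) \<in> frac_rel I" by (simp add: frac_def)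
  then have "snd p \<notin> I" "s \<notin> I" by (cases p, auto simp: frac_rel_def)+
  moreover have "frac I a s = frac I (fst p) (snd p)"
    using r equiv_class_eq[OF frac_equiv r] by (simp add: frac_def)
  ultimately show ?thesis by simp
qed

lemma frac_rel_mult:
  assumes "a*s' - a'*s \<in> I" "b*t' - b'*t \<in> I"
  shows "(a*b)*(s'*t') - (a'*b')*(s*t) \<in> I"
proof -
  have "(a*b)*(s'*t') - (a'*b')*(s*t) = (b*t')*(a*s' - a'*s) + (a'*s)*(b*t' - b'*t)"
    by (simp add: algebra_simps)
  also have "\<dots> \<in> I" using assms by (intro pi_add pi_multl)
  finally show ?thesis .
qed

lemma frac_rel_add:
  assumes "a*s' - a'*s \<in> I" "b*t' - b'*t \<in> I"
  shows "(a*t + b*s)*(s'*t') - (a'*t' + b'*s')*(s*t) \<in> I"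
proof -
  have "(a*t + b*s)*(s'*t') - (a'*t' + b'*s')*(s*t) = (t*t')*(a*s' - a'*s) + (s*s')*(b*t' - b'*t)"
    by (simp add: algebra_simps)
  also have "\<dots> \<in> I" using assms by (intro pi_add pi_multl)
  finally show ?thesis .
qed

lemma UN_const2:
  assumes "\<And>p q. p \<in> X \<Longrightarrow> q \<in> Y \<Longrightarrow> F p q = C" "uu \<in> X" "vv \<in> Y"
  shows "(\<Union>p\<in>X. \<Union>q\<in>Y. F p q) = C"
  using assms by (auto 0 3)

lemma frac_mult_eq:
  assumes "s \<notin> I" "t \<notin> I"
  shows "frac_mult I (frac I a s) (frac I b t) = frac I (a*b) (s*t)"
proof -
  have "frac I (fst p * fst q) (snd p * snd q) = frac I (a*b) (s*t)"
    if "p \<in> frac I a s" "q \<in> frac I b t" for p q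
  proof -
    from that have r: "((a,s),p) \<in> frac_rel I" "((b,t),q) \<in> frac_rel I" by (simp_all add: frac_def)
    then have h: "snd p \<notin> I" "snd q \<notin> I" "a * snd p - fst p * s \<in> I" "b * snd q - fst q * t \<in> I"
      by (cases p, cases q, auto simp: frac_rel_def)+
    have nz: "snd p * snd q \<notin> I" "s*t \<notin> I" using pi_nprod[OF h(1,2)] pi_nprod[OF assms] by auto
    show ?thesis by (rule iffD2[OF frac_eq[OF nz]], rule pi_swap[OF frac_rel_mult[OF h(3,4)]])
  qed
  then show ?thesis unfolding frac_mult_def
    by (rule UN_const2[where uu="(a,s)" and vv="(b,t)"]) (simp_all add: frac_self assms)
qed

lemma frac_add_eq:
  assumes "s \<notin> I" "t \<notin> I"
  shows "frac_add I (frac I a s) (frac I b t) = frac I (a*t + b*s) (s*t)"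
proof -
  have "frac I (fst p * snd q + fst q * snd p) (snd p * snd q) = frac I (a*t + b*s) (s*t)"
    if "p \<in> frac I a s" "q \<in> frac I b t" for p q
  proof -
    from that have r: "((a,s),p) \<in> frac_rel I" "((b,t),q) \<in> frac_rel I" by (simp_all add: frac_def)
    then have h: "snd p \<notin> I" "snd q \<notin> I" "a * snd p - fst p * s \<in> I" "b * snd q - fst q * t \<in> I"
      by (cases p, cases q, auto simp: frac_rel_def)+
    have nz: "snd p * snd q \<notin> I" "s*t \<notin> I" using pi_nprod[OF h(1,2)] pi_nprod[OF assms] by auto
    show ?thesis by (rule iffD2[OF frac_eq[OF nz]], rule pi_swap[OF frac_rel_add[OF h(3,4)]])
  qed
  then show ?thesis unfolding frac_add_def
    by (rule UN_const2[where uu="(a,s)" and vv="(b,t)"]) (simp_all add: frac_self assms)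
qed

end



section \<open>Ordered abelian groups\<close>

context fixes G :: "('g,'m) ogroup_scheme" assumes OG: "ordered_ab_group G"
begin
lemma og_zero: "gzero G \<in> gcar G" using OG unfolding ordered_ab_group_def by (elim conjE) assumption
lemma og_add: "x \<in> gcar G \<Longrightarrow> y \<in> gcar G \<Longrightarrow> gadd G x y \<in> gcar G"
proof -
  have H: "\<forall>x\<in>gcar G. \<forall>y\<in>gcar G. gadd G x y \<in> gcar G"
    using OG unfolding ordered_ab_group_def by (elim conjE) assumption
  then show "x \<in> gcar G \<Longrightarrow> y \<in> gcar G \<Longrightarrow> gadd G x y \<in> gcar G" by blast
qed
lemma og_neg: "x \<in> gcar G \<Longrightarrow> gneg G x \<in> gcar G"
proof -
  have H: "\<forall>x\<in>gcar G. gneg G x \<in> gcar G"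
    using OG unfolding ordered_ab_group_def by (elim conjE) assumption
  then show "x \<in> gcar G \<Longrightarrow> gneg G x \<in> gcar G" by blast
qed
lemma og_assoc: "x \<in> gcar G \<Longrightarrow> y \<in> gcar G \<Longrightarrow> z \<in> gcar G \<Longrightarrow> gadd G (gadd G x y) z = gadd G x (gadd G y z)"
proof -
  have H: "\<forall>x\<in>gcar G. \<forall>y\<in>gcar G. \<forall>z\<in>gcar G. gadd G (gadd G x y) z = gadd G x (gadd G y z)"
    using OG unfolding ordered_ab_group_def by (elim conjE) assumption
  then show "x \<in> gcar G \<Longrightarrow> y \<in> gcar G \<Longrightarrow> z \<in> gcar G \<Longrightarrow> gadd G (gadd G x y) z = gadd G x (gadd G y z)" by blast
qed
lemma og_comm: "x \<in> gcar G \<Longrightarrow> y \<in> gcar G \<Longrightarrow> gadd G x y = gadd G y x"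
proof -
  have H: "\<forall>x\<in>gcar G. \<forall>y\<in>gcar G. gadd G x y = gadd G y x"
    using OG unfolding ordered_ab_group_def by (elim conjE) assumption
  then show "x \<in> gcar G \<Longrightarrow> y \<in> gcar G \<Longrightarrow> gadd G x y = gadd G y x" by blast
qed
lemma og_lzero: "x \<in> gcar G \<Longrightarrow> gadd G (gzero G) x = x"
proof -
  have H: "\<forall>x\<in>gcar G. gadd G (gzero G) x = x"
    using OG unfolding ordered_ab_group_def by (elim conjE) assumption
  then show "x \<in> gcar G \<Longrightarrow> gadd G (gzero G) x = x" by blast
qed
lemma og_linv: "x \<in> gcar G \<Longrightarrow> gadd G (gneg G x) x = gzero G"
proof -
  have H: "\<forall>x\<in>gcar G. gadd G (gneg G x) x = gzero G"
    using OG unfolding ordered_ab_group_def by (elim conjE) assumption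
  then show "x \<in> gcar G \<Longrightarrow> gadd G (gneg G x) x = gzero G" by blast
qed
lemma og_refl: "x \<in> gcar G \<Longrightarrow> gle G x x"
proof -
  have H: "\<forall>x\<in>gcar G. gle G x x"
    using OG unfolding ordered_ab_group_def by (elim conjE) assumption
  then show "x \<in> gcar G \<Longrightarrow> gle G x x" by blast
qed
lemma og_trans: "x \<in> gcar G \<Longrightarrow> y \<in> gcar G \<Longrightarrow> z \<in> gcar G \<Longrightarrow> gle G x y \<Longrightarrow> gle G y z \<Longrightarrow> gle G x z"
proof -
  have H: "\<forall>x\<in>gcar G. \<forall>y\<in>gcar G. \<forall>z\<in>gcar G. gle G x y \<longrightarrow> gle G y z \<longrightarrow> gle G x z"
    using OG unfolding ordered_ab_group_def by (elim conjE) assumption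
  then show "x \<in> gcar G \<Longrightarrow> y \<in> gcar G \<Longrightarrow> z \<in> gcar G \<Longrightarrow> gle G x y \<Longrightarrow> gle G y z \<Longrightarrow> gle G x z" by blast
qed
lemma og_antisym: "x \<in> gcar G \<Longrightarrow> y \<in> gcar G \<Longrightarrow> gle G x y \<Longrightarrow> gle G y x \<Longrightarrow> x = y"
proof -
  have H: "\<forall>x\<in>gcar G. \<forall>y\<in>gcar G. gle G x y \<longrightarrow> gle G y x \<longrightarrow> x = y"
    using OG unfolding ordered_ab_group_def by (elim conjE) assumption
  then show "x \<in> gcar G \<Longrightarrow> y \<in> gcar G \<Longrightarrow> gle G x y \<Longrightarrow> gle G y x \<Longrightarrow> x = y" by blast
qed
lemma og_total: "x \<in> gcar G \<Longrightarrow> y \<in> gcar G \<Longrightarrow> gle G x y \<or> gle G y x"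
proof -
  have H: "\<forall>x\<in>gcar G. \<forall>y\<in>gcar G. gle G x y \<or> gle G y x"
    using OG unfolding ordered_ab_group_def by (elim conjE) assumption
  then show "x \<in> gcar G \<Longrightarrow> y \<in> gcar G \<Longrightarrow> gle G x y \<or> gle G y x" by blast
qed
lemma og_mono: "x \<in> gcar G \<Longrightarrow> y \<in> gcar G \<Longrightarrow> z \<in> gcar G \<Longrightarrow> gle G x y \<Longrightarrow> gle G (gadd G x z) (gadd G y z)"
proof -
  have H: "\<forall>x\<in>gcar G. \<forall>y\<in>gcar G. \<forall>z\<in>gcar G. gle G x y \<longrightarrow> gle G (gadd G x z) (gadd G y z)"
    using OG unfolding ordered_ab_group_def by (elim conjE) assumption
  then show "x \<in> gcar G \<Longrightarrow> y \<in> gcar G \<Longrightarrow> z \<in> gcar G \<Longrightarrow> gle G x y \<Longrightarrow> gle G (gadd G x z) (gadd G y z)" by blast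
qed

lemma og_addneg: "x \<in> gcar G \<Longrightarrow> z \<in> gcar G \<Longrightarrow> gadd G (gadd G x z) (gneg G z) = x"
proof -
  assume x: "x \<in> gcar G" and z: "z \<in> gcar G"
  have "gadd G (gadd G x z) (gneg G z) = gadd G x (gadd G z (gneg G z))" using x z og_neg og_assoc by blast
  also have "gadd G z (gneg G z) = gzero G" using z og_neg og_comm og_linv by metis
  also have "gadd G x (gzero G) = x" using x og_zero og_comm og_lzero by metis
  finally show ?thesis .
qed

lemma og_cancel: "x \<in> gcar G \<Longrightarrow> y \<in> gcar G \<Longrightarrow> z \<in> gcar G \<Longrightarrow> gadd G x z = gadd G y z \<Longrightarrow> x = y"
  by (metis og_addneg)

lemma og_le_cancel: "x \<in> gcar G \<Longrightarrow> y \<in> gcar G \<Longrightarrow> z \<in> gcar G \<Longrightarrow> gle G (gadd G x z) (gadd G y z) \<Longrightarrow> gle G x y"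
  by (metis og_addneg og_mono og_add og_neg)

lemma og_idem: "x \<in> gcar G \<Longrightarrow> gadd G x x = x \<Longrightarrow> x = gzero G"
  by (metis og_cancel og_lzero og_zero)

lemma og_double: "x \<in> gcar G \<Longrightarrow> gadd G x x = gzero G \<Longrightarrow> x = gzero G"
proof -
  assume x: "x \<in> gcar G" and h: "gadd G x x = gzero G"
  consider "gle G x (gzero G)" | "gle G (gzero G) x" using og_total[OF x og_zero] by blast
  then show ?thesis
  proof cases
    case 1
    then have "gle G (gadd G x x) (gadd G (gzero G) x)" using og_mono x og_zero by blast
    then have "gle G (gzero G) x" using h og_lzero x by simp
    then show ?thesis using 1 og_antisym x og_zero by blast
  next
    case 2
    then have "gle G (gadd G (gzero G) x) (gadd G x x)" using og_mono x og_zero by blast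
    then have "gle G x (gzero G)" using h og_lzero x by simp
    then show ?thesis using 2 og_antisym x og_zero by blast
  qed
qed

lemma vle_None: "vle G None y \<longleftrightarrow> y = None" by (cases y) (auto simp: vle_def)
lemma vle_None2: "vle G x None" by (simp add: vle_def)
lemma vle_Some: "vle G (Some a) (Some b) \<longleftrightarrow> gle G a b" by (simp add: vle_def)
lemma vle_SomeNone: "\<not> vle G (Some a) None \<longleftrightarrow> False" by (simp add: vle_def)

lemma gi_cases: "in_gamma_inf G x \<Longrightarrow> (x = None \<Longrightarrow> P) \<Longrightarrow> (\<And>a. x = Some a \<Longrightarrow> a \<in> gcar G \<Longrightarrow> P) \<Longrightarrow> P"
  by (cases x) (auto simp: in_gamma_inf_def)

lemma vle_refl: "in_gamma_inf G x \<Longrightarrow> vle G x x"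
  by (erule gi_cases) (auto simp: vle_def og_refl)

lemma vle_trans: "in_gamma_inf G x \<Longrightarrow> in_gamma_inf G y \<Longrightarrow> in_gamma_inf G z \<Longrightarrow> vle G x y \<Longrightarrow> vle G y z \<Longrightarrow> vle G x z"
  by (erule gi_cases; erule gi_cases; erule gi_cases) (auto simp: vle_def intro: og_trans)

lemma vle_total: "in_gamma_inf G x \<Longrightarrow> in_gamma_inf G y \<Longrightarrow> vle G x y \<or> vle G y x"
  by (erule gi_cases; erule gi_cases) (auto simp: vle_def dest: og_total)

lemma vadd_mono: "in_gamma_inf G x \<Longrightarrow> in_gamma_inf G y \<Longrightarrow> in_gamma_inf G z \<Longrightarrow> vle G x y \<Longrightarrow> vle G (vadd G x z) (vadd G y z)"
  by (erule gi_cases; erule gi_cases; erule gi_cases) (auto simp: vle_def vadd_def intro: og_mono)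

lemma vadd_cancel: "in_gamma_inf G x \<Longrightarrow> in_gamma_inf G y \<Longrightarrow> c \<in> gcar G \<Longrightarrow> vle G (vadd G x (Some c)) (vadd G y (Some c)) \<Longrightarrow> vle G x y"
  by (erule gi_cases; erule gi_cases) (auto simp: vle_def vadd_def intro: og_le_cancel)

lemma vmin_le: "vle G u x \<Longrightarrow> vle G u y \<Longrightarrow> vle G u (vmin G x y)"
  by (simp add: vmin_def)

lemma vle_zero_shift: "in_gamma_inf G y \<Longrightarrow> c \<in> gcar G \<Longrightarrow>
    vle G (Some (gzero G)) y \<longleftrightarrow> vle G (Some c) (vadd G y (Some c))"
proof (erule gi_cases)
  assume "y = None" then show ?thesis by (simp add: vle_def vadd_def)
next
  fix b assume y: "y = Some b" and b: "b \<in> gcar G" and c: "c \<in> gcar G"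
  have "gle G (gzero G) b \<longleftrightarrow> gle G (gadd G (gzero G) c) (gadd G b c)"
    using og_mono og_le_cancel og_zero b c by blast
  then show ?thesis using y c by (simp add: vle_def vadd_def og_lzero)
qed
end

section \<open>Bourbaki valuations\<close>

locale bv =
  fixes G :: "('g,'m) ogroup_scheme" and v :: "'a::comm_ring_1 \<Rightarrow> 'g option" and w
  assumes OG: "ordered_ab_group G" and gi: "\<And>a. in_gamma_inf G (v a)"
    and PI: "prime_ideal (inf_set v)" and IW: "induced_field_valuation G v w"
begin
abbreviation "I \<equiv> inf_set v"

lemma FV: "frac_field_valuation I G w" using IW unfolding induced_field_valuation_def by (elim conjE) assumption
lemma v_w: "v a = w (frac I a 1)"
proof -
  have "\<forall>a. v a = w (frac (inf_set v) a 1)" using IW unfolding induced_field_valuation_def by (elim conjE) assumption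
  then show ?thesis by blast
qed
lemma v_None: "v a = None \<longleftrightarrow> a \<in> I" by (simp add: inf_set_def)
lemma one_notin: "1 \<notin> I" using pi_one[OF PI] .

lemma w_gi: "X \<in> frac_field I \<Longrightarrow> in_gamma_inf G (w X)"
proof -
  have "\<forall>x\<in>frac_field I. in_gamma_inf G (w x)" using FV unfolding frac_field_valuation_def by (elim conjE) assumption
  then show "X \<in> frac_field I \<Longrightarrow> in_gamma_inf G (w X)" by blast
qed
lemma w_mult: "X \<in> frac_field I \<Longrightarrow> Y \<in> frac_field I \<Longrightarrow> w (frac_mult I X Y) = vadd G (w X) (w Y)"
proof -
  have "\<forall>x\<in>frac_field I. \<forall>y\<in>frac_field I. w (frac_mult I x y) = vadd G (w x) (w y)" using FV unfolding frac_field_valuation_def by (elim conjE) assumption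
  then show "X \<in> frac_field I \<Longrightarrow> Y \<in> frac_field I \<Longrightarrow> w (frac_mult I X Y) = vadd G (w X) (w Y)" by blast
qed
lemma w_add: "X \<in> frac_field I \<Longrightarrow> Y \<in> frac_field I \<Longrightarrow> vle G (vmin G (w X) (w Y)) (w (frac_add I X Y))"
proof -
  have "\<forall>x\<in>frac_field I. \<forall>y\<in>frac_field I. vle G (vmin G (w x) (w y)) (w (frac_add I x y))" using FV unfolding frac_field_valuation_def by (elim conjE) assumption
  then show "X \<in> frac_field I \<Longrightarrow> Y \<in> frac_field I \<Longrightarrow> vle G (vmin G (w X) (w Y)) (w (frac_add I X Y))" by blast
qed

lemma v_mult: "v (a*b) = vadd G (v a) (v b)"
proof -
  have "frac_mult I (frac I a 1) (frac I b 1) = frac I (a*b) 1"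
    using frac_mult_eq[OF PI one_notin one_notin] by simp
  then show ?thesis using w_mult[OF frac_in_field[OF PI one_notin] frac_in_field[OF PI one_notin]] v_w
    by metis
qed

lemma v_add: "vle G (vmin G (v a) (v b)) (v (a+b))"
proof -
  have "frac_add I (frac I a 1) (frac I b 1) = frac I (a+b) 1"
    using frac_add_eq[OF PI one_notin one_notin] by simp
  then show ?thesis using w_add[OF frac_in_field[OF PI one_notin] frac_in_field[OF PI one_notin]] v_w
    by metis
qed

lemma v_zero: "v 0 = None" using pi_zero[OF PI] v_None by simp

lemma v_one: "v 1 = Some (gzero G)"
proof -
  obtain oo where o: "v 1 = Some oo" "oo \<in> gcar G" using gi[of 1] one_notin v_None by (auto elim: gi_cases[OF OG])
  have "v (1*1) = vadd G (v 1) (v 1)" by (rule v_mult)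
  then have "gadd G oo oo = oo" using o by (simp add: vadd_def)
  then show ?thesis using og_idem[OF OG o(2)] o by simp
qed

lemma v_neg_one: "v (-1) = Some (gzero G)"
proof -
  have "-1 \<notin> I"
  proof
    assume "-1 \<in> I" then have "(-1) * (-1) \<in> I" using pi_multl[OF PI] by blast
    then show False using one_notin by simp
  qed
  then obtain m where m: "v (-1) = Some m" "m \<in> gcar G" using gi[of "-1"] v_None by (auto elim: gi_cases[OF OG])
  have "v ((-1)*(-1)) = vadd G (v (-1)) (v (-1))" by (rule v_mult)
  then have "gadd G m m = gzero G" using m v_one by (simp add: vadd_def)
  then show ?thesis using og_double[OF OG m(2)] m by simp
qed

lemma v_uminus: "v (-a) = v a"
proof -
  have "v (-a) = vadd G (v (-1)) (v a)" using v_mult[of "-1" a] by simp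
  then show ?thesis using v_neg_one gi[of a] by (auto simp: vadd_def og_lzero[OF OG] elim: gi_cases[OF OG])
qed

lemma v_diff: "vle G u (v b) \<Longrightarrow> vle G u (v c) \<Longrightarrow> in_gamma_inf G u \<Longrightarrow> vle G u (v (b - c))"
proof -
  assume h: "vle G u (v b)" "vle G u (v c)" "in_gamma_inf G u"
  have "vle G u (vmin G (v b) (v (-c)))" using h v_uminus by (simp add: vmin_le[OF OG])
  moreover have "in_gamma_inf G (vmin G (v b) (v (-c)))" using gi by (simp add: vmin_def)
  ultimately show ?thesis using v_add[of b "-c"] vle_trans[OF OG h(3) _ gi] by simp
qed

lemma w_frac: "s \<notin> I \<Longrightarrow> v a = vadd G (w (frac I a s)) (v s)"
proof -
  assume s: "s \<notin> I"
  have "frac_mult I (frac I a s) (frac I s 1) = frac I (a*s) (s*1)" using frac_mult_eq[OF PI s one_notin] .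
  also have "\<dots> = frac I a 1" using frac_eq[OF PI, of "s*1" 1 "a*s" a] s one_notin pi_zero[OF PI]
    by (simp add: mult.commute)
  finally show ?thesis using w_mult[OF frac_in_field[OF PI s] frac_in_field[OF PI one_notin]] v_w by metis
qed

lemma ring_iff: "s \<notin> I \<Longrightarrow> vle G (Some (gzero G)) (w (frac I a s)) \<longleftrightarrow> vle G (v s) (v a)"
proof -
  assume s: "s \<notin> I"
  obtain c where c: "v s = Some c" "c \<in> gcar G" using gi[of s] s v_None by (auto elim: gi_cases[OF OG])
  show ?thesis using vle_zero_shift[OF OG w_gi[OF frac_in_field[OF PI s]] c(2)] w_frac[OF s, of a] c(1) by simp
qed

lemma valdiv: "valuation_divisibility (val_div G v) \<and> div_support (val_div G v) = inf_set v"
proof -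
  have "divisibility (val_div G v)"
    unfolding divisibility_def val_div_def
  proof (intro conjI allI impI)
    fix a show "vle G (v a) (v a)" using vle_refl[OF OG gi] .
  next
    fix a b c assume "vle G (v a) (v b)" "vle G (v b) (v c)" then show "vle G (v a) (v c)"
      using vle_trans[OF OG gi gi gi] by blast
  next
    fix a b c assume "vle G (v a) (v b)" "vle G (v a) (v c)" then show "vle G (v a) (v (b - c))"
      using v_diff gi by blast
  next
    fix a b c assume "vle G (v a) (v b)" then show "vle G (v (a*c)) (v (b*c))"
      using v_mult vadd_mono[OF OG gi gi gi] by simp
  next
    show "\<not> vle G (v 0) (v 1)" using v_zero v_one by (simp add: vle_def)
  qed
  moreover have "div_total (val_div G v)" unfolding div_total_def val_div_def using vle_total[OF OG gi gi] by blast
  moreover have "div_cancellation (val_div G v)" unfolding div_cancellation_def val_div_def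
  proof (intro allI impI)
    fix a b c assume nc: "\<not> vle G (v 0) (v c)" and h: "vle G (v (a*c)) (v (b*c))"
    obtain d where d: "v c = Some d" "d \<in> gcar G" using gi[of c] nc v_zero by (auto simp: vle_def elim: gi_cases[OF OG])
    show "vle G (v a) (v b)" using vadd_cancel[OF OG gi gi d(2)] h v_mult d(1) by metis
  qed
  moreover have "div_support (val_div G v) = inf_set v"
    by (auto simp: div_support_def val_div_def v_zero vle_None[OF OG] inf_set_def)
  ultimately show ?thesis by (simp add: valuation_divisibility_def)
qed

end



lemma bv_of: "bourbaki_valuation G v \<Longrightarrow> induced_field_valuation G v w \<Longrightarrow> bv G v w"
  unfolding bourbaki_valuation_def bv_def by blast

lemma bv_ex: "bourbaki_valuation G v \<Longrightarrow> \<exists>w. bv G v w"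
  unfolding bourbaki_valuation_def bv_def by blast

lemma part2:
  fixes G1 :: "('g,'m) ogroup_scheme" and v1 :: "'a::comm_ring_1 \<Rightarrow> 'g option"
    and G2 :: "('h,'n) ogroup_scheme" and v2 :: "'a \<Rightarrow> 'h option"
  assumes B1: "bourbaki_valuation G1 v1" and B2: "bourbaki_valuation G2 v2"
  shows "val_div G1 v1 = val_div G2 v2 \<longleftrightarrow> bourbaki_equiv G1 v1 G2 v2"
proof
  obtain w1 where W1: "bv G1 v1 w1" using bv_ex[OF B1] by blast
  obtain w2 where W2: "bv G2 v2 w2" using bv_ex[OF B2] by blast
  assume eq: "val_div G1 v1 = val_div G2 v2"
  have vv: "vle G1 (v1 a) (v1 b) \<longleftrightarrow> vle G2 (v2 a) (v2 b)" for a b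
    using fun_cong[OF fun_cong[OF eq, of a], of b] by (simp add: val_div_def)
  have II: "inf_set v1 = inf_set v2"
  proof (rule set_eqI)
    fix a
    have "a \<in> inf_set v1 \<longleftrightarrow> vle G1 (v1 0) (v1 a)"
      by (simp add: bv.v_zero[OF W1] vle_None[OF bv.OG[OF W1]] inf_set_def)
    also have "\<dots> \<longleftrightarrow> vle G2 (v2 0) (v2 a)" by (rule vv)
    also have "\<dots> \<longleftrightarrow> a \<in> inf_set v2"
      by (simp add: bv.v_zero[OF W2] vle_None[OF bv.OG[OF W2]] inf_set_def)
    finally show "a \<in> inf_set v1 \<longleftrightarrow> a \<in> inf_set v2" .
  qed
  have RR: "field_valuation_ring (inf_set v1) G1 w1 = field_valuation_ring (inf_set v2) G2 w2"
  proof (rule set_eqI)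
    fix X
    show "X \<in> field_valuation_ring (inf_set v1) G1 w1 \<longleftrightarrow> X \<in> field_valuation_ring (inf_set v2) G2 w2"
    proof (cases "X \<in> frac_field (inf_set v1)")
      case True
      then obtain a s where s: "s \<notin> inf_set v1" and X: "X = frac (inf_set v1) a s"
        using frac_fieldE[OF bv.PI[OF W1]] by blast
      have "vle G1 (Some (gzero G1)) (w1 X) \<longleftrightarrow> vle G1 (v1 s) (v1 a)" using bv.ring_iff[OF W1 s] X by simp
      also have "\<dots> \<longleftrightarrow> vle G2 (v2 s) (v2 a)" by (rule vv)
      also have "\<dots> \<longleftrightarrow> vle G2 (Some (gzero G2)) (w2 X)" using bv.ring_iff[OF W2, of s a] s X II by simp
      finally show ?thesis using True II by (simp add: field_valuation_ring_def)
    next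
      case False then show ?thesis using II by (simp add: field_valuation_ring_def)
    qed
  qed
  show "bourbaki_equiv G1 v1 G2 v2" unfolding bourbaki_equiv_def
    using II RR W1 W2 by (auto simp: bv_def)
next
  assume "bourbaki_equiv G1 v1 G2 v2"
  then obtain w1 w2 where II: "inf_set v1 = inf_set v2" and I1: "induced_field_valuation G1 v1 w1"
    and I2: "induced_field_valuation G2 v2 w2"
    and RR: "field_valuation_ring (inf_set v1) G1 w1 = field_valuation_ring (inf_set v2) G2 w2"
    unfolding bourbaki_equiv_def by blast
  have W1: "bv G1 v1 w1" by (rule bv_of[OF B1 I1])
  have W2: "bv G2 v2 w2" by (rule bv_of[OF B2 I2])
  have "vle G1 (v1 a) (v1 b) \<longleftrightarrow> vle G2 (v2 a) (v2 b)" for a b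
  proof (cases "a \<in> inf_set v1")
    case True
    then have "v1 a = None" "v2 a = None" using II bv.v_None[OF W1] bv.v_None[OF W2] by auto
    then show ?thesis using vle_None[OF bv.OG[OF W1]] vle_None[OF bv.OG[OF W2]]
      bv.v_None[OF W1, of b] bv.v_None[OF W2, of b] II by simp
  next
    case False
    have fin: "frac (inf_set v1) b a \<in> frac_field (inf_set v1)" using frac_in_field[OF bv.PI[OF W1] False] .
    have "vle G1 (v1 a) (v1 b) \<longleftrightarrow> frac (inf_set v1) b a \<in> field_valuation_ring (inf_set v1) G1 w1"
      using bv.ring_iff[OF W1 False] fin by (simp add: field_valuation_ring_def)
    also have "\<dots> \<longleftrightarrow> frac (inf_set v2) b a \<in> field_valuation_ring (inf_set v2) G2 w2" using RR II by simp
    also have "\<dots> \<longleftrightarrow> vle G2 (v2 a) (v2 b)"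
      using bv.ring_iff[OF W2, of a b] False II fin by (simp add: field_valuation_ring_def)
    finally show ?thesis .
  qed
  then show "val_div G1 v1 = val_div G2 v2" by (auto simp: val_div_def fun_eq_iff)
qed




locale vd =
  fixes R :: "'a::comm_ring_1 \<Rightarrow> 'a \<Rightarrow> bool"
  assumes VD: "valuation_divisibility R"
begin

lemma DV: "divisibility R" using VD unfolding valuation_divisibility_def by (elim conjE) assumption

lemma Rrefl: "R a a"
proof -
  have "\<forall>a. R a a" using DV unfolding divisibility_def by (elim conjE) assumption
  then show ?thesis by blast
qed
lemma Rtrans: "R a b \<Longrightarrow> R b c \<Longrightarrow> R a c"
proof -
  have "\<forall>a b c. R a b \<longrightarrow> R b c \<longrightarrow> R a c" using DV unfolding divisibility_def by (elim conjE) assumption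
  then show "R a b \<Longrightarrow> R b c \<Longrightarrow> R a c" by blast
qed
lemma Rdiff: "R a b \<Longrightarrow> R a c \<Longrightarrow> R a (b - c)"
proof -
  have "\<forall>a b c. R a b \<longrightarrow> R a c \<longrightarrow> R a (b - c)" using DV unfolding divisibility_def by (elim conjE) assumption
  then show "R a b \<Longrightarrow> R a c \<Longrightarrow> R a (b - c)" by blast
qed
lemma Rmult: "R a b \<Longrightarrow> R (a*c) (b*c)"
proof -
  have "\<forall>a b c. R a b \<longrightarrow> R (a*c) (b*c)" using DV unfolding divisibility_def by (elim conjE) assumption
  then show "R a b \<Longrightarrow> R (a*c) (b*c)" by blast
qed
lemma R01: "\<not> R 0 1" using DV unfolding divisibility_def by (elim conjE) assumption
lemma Rtot: "R a b \<or> R b a"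
proof -
  have "\<forall>a b. R a b \<or> R b a" using VD unfolding valuation_divisibility_def div_total_def by (elim conjE) assumption
  then show ?thesis by blast
qed
lemma Rcanc: "\<not> R 0 c \<Longrightarrow> R (a*c) (b*c) \<Longrightarrow> R a b"
proof -
  have "\<forall>a b c. \<not> R 0 c \<longrightarrow> R (a*c) (b*c) \<longrightarrow> R a b" using VD unfolding valuation_divisibility_def div_cancellation_def by (elim conjE) assumption
  then show "\<not> R 0 c \<Longrightarrow> R (a*c) (b*c) \<Longrightarrow> R a b" by blast
qed

lemma Rzero: "R a 0" using Rdiff[OF Rrefl Rrefl, of a] by simp
lemma Rneg: "R a b \<Longrightarrow> R a (- b)" using Rdiff[OF Rzero, of a b] by simp
lemma Radd: "R a b \<Longrightarrow> R a c \<Longrightarrow> R a (b + c)" using Rdiff[of a b "-c"] Rneg[of a c] by simp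
lemma RI: "R 0 x \<Longrightarrow> R a x" using Rtrans[OF Rzero] .
lemma Requiv: "R 0 (x - y) \<Longrightarrow> R x y"
proof -
  assume h: "R 0 (x - y)"
  have "R x (x - y)" using RI[OF h] .
  from Rdiff[OF Rrefl this] show "R x y" by simp
qed
lemma Rmultl: "R a b \<Longrightarrow> R (c*a) (c*b)" using Rmult[of a b c] by (simp add: mult.commute)
lemma Rsubst: "R a b \<Longrightarrow> a = a' \<Longrightarrow> b = b' \<Longrightarrow> R a' b'" by simp

abbreviation nz :: "'a \<Rightarrow> bool" where "nz a \<equiv> \<not> R 0 a"

lemma nz_mult: "nz a \<Longrightarrow> nz b \<Longrightarrow> nz (a*b)"
proof
  assume a: "nz a" and b: "nz b" and h: "R 0 (a*b)"
  have "R (0*b) (a*b)" using h by simp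
  then show False using Rcanc[OF b] a by blast
qed
lemma nz_one: "nz 1" by (rule R01)

abbreviation "IR \<equiv> {a. R 0 a}"

lemma PI: "prime_ideal IR"
  unfolding prime_ideal_def
proof (intro conjI ballI allI impI)
  show "0 \<in> IR" using Rrefl by simp
  show "a - b \<in> IR" if "a \<in> IR" "b \<in> IR" for a b using that Rdiff by simp
  show "r * a \<in> IR" if "a \<in> IR" for a r using that Rmultl[of 0 a r] by simp
  show "1 \<notin> IR" using R01 by simp
  show "a \<in> IR \<or> b \<in> IR" if "a * b \<in> IR" for a b using that nz_mult by auto
qed

end



context vd begin

definition P :: "('a \<times> 'a) set" where "P = {p. nz (fst p) \<and> nz (snd p)}"
definition le :: "'a \<times> 'a \<Rightarrow> 'a \<times> 'a \<Rightarrow> bool" where "le p q \<longleftrightarrow> R (fst p * snd q) (fst q * snd p)"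
definition EE :: "'a \<times> 'a \<Rightarrow> 'a \<times> 'a \<Rightarrow> bool" where "EE p q \<longleftrightarrow> p \<in> P \<and> q \<in> P \<and> le p q \<and> le q p"
definition mulp :: "'a \<times> 'a \<Rightarrow> 'a \<times> 'a \<Rightarrow> 'a \<times> 'a" where "mulp p q = (fst p * fst q, snd p * snd q)"
definition rep :: "'a \<times> 'a \<Rightarrow> 'a \<times> 'a" where "rep p = (SOME q. EE p q)"

lemma P_iff: "p \<in> P \<longleftrightarrow> nz (fst p) \<and> nz (snd p)" by (simp add: P_def)

lemma le_refl: "le p p" by (simp add: le_def Rrefl)

lemma le_trans: "le p q \<Longrightarrow> le q r \<Longrightarrow> nz (snd q) \<Longrightarrow> le p r"
proof -
  assume h1: "le p q" and h2: "le q r" and n: "nz (snd q)"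
  obtain a s where p: "p = (a,s)" by (cases p)
  obtain b t where q: "q = (b,t)" by (cases q)
  obtain c u where r: "r = (c,u)" by (cases r)
  have A: "R (a*t) (b*s)" using h1 p q by (simp add: le_def)
  have B: "R (b*u) (c*t)" using h2 q r by (simp add: le_def)
  have A': "R ((a*u)*t) ((b*u)*s)" by (rule Rsubst[OF Rmult[OF A, of u]]) (simp_all add: ac_simps)
  have B': "R ((b*u)*s) ((c*s)*t)" by (rule Rsubst[OF Rmult[OF B, of s]]) (simp_all add: ac_simps)
  have C: "R ((a*u)*t) ((c*s)*t)" using Rtrans[OF A' B'] .
  have nt: "nz t" using n q by simp
  have "R (a*u) (c*s)" using Rcanc[OF nt C] .
  then show "le p r" using p r by (simp add: le_def)
qed

lemma EE_refl: "p \<in> P \<Longrightarrow> EE p p" by (simp add: EE_def le_refl)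
lemma EE_sym: "EE p q \<Longrightarrow> EE q p" by (auto simp: EE_def)
lemma EE_trans: "EE p q \<Longrightarrow> EE q r \<Longrightarrow> EE p r"
  unfolding EE_def using le_trans P_iff by blast

lemma rep: "p \<in> P \<Longrightarrow> EE p (rep p)"
  unfolding rep_def by (rule someI[of "EE p" p]) (rule EE_refl)
lemma rep_P: "p \<in> P \<Longrightarrow> rep p \<in> P" using rep by (simp add: EE_def)

lemma rep_eq: "EE p q \<Longrightarrow> rep p = rep q"
proof -
  assume h: "EE p q"
  have "(\<lambda>r. EE p r) = (\<lambda>r. EE q r)"
    using h EE_sym EE_trans by (intro ext iffI) blast+
  then show ?thesis unfolding rep_def by simp
qed

lemma rep_iff: "p \<in> P \<Longrightarrow> q \<in> P \<Longrightarrow> rep p = rep q \<longleftrightarrow> EE p q"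
proof
  assume "p \<in> P" "q \<in> P" "rep p = rep q"
  then show "EE p q" using rep[of p] rep[of q] EE_sym EE_trans by metis
qed (rule rep_eq)

lemma rep_rep: "p \<in> P \<Longrightarrow> rep (rep p) = rep p"
  using rep_eq[OF rep] by simp

lemma le_resp: "EE p p' \<Longrightarrow> EE q q' \<Longrightarrow> le p q \<Longrightarrow> le p' q'"
proof -
  assume e1: "EE p p'" and e2: "EE q q'" and h: "le p q"
  have "le p' q" using le_trans[of p' p q] e1 h by (simp add: EE_def P_iff)
  then show "le p' q'" using le_trans[of p' q q'] e2 by (simp add: EE_def P_iff)
qed

lemma le_resp_iff: "EE p p' \<Longrightarrow> EE q q' \<Longrightarrow> le p q \<longleftrightarrow> le p' q'"
  using le_resp EE_sym by blast

lemma mulp_P: "p \<in> P \<Longrightarrow> q \<in> P \<Longrightarrow> mulp p q \<in> P"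
  by (simp add: P_iff mulp_def nz_mult)

lemma mulp_comm: "mulp p q = mulp q p" by (simp add: mulp_def mult.commute)
lemma mulp_assoc: "mulp (mulp p q) r = mulp p (mulp q r)" by (simp add: mulp_def mult.assoc)

lemma le_mulp: "le p q \<Longrightarrow> le (mulp p r) (mulp q r)"
proof -
  assume h: "le p q"
  obtain a s where p: "p = (a,s)" by (cases p)
  obtain b t where q: "q = (b,t)" by (cases q)
  obtain c u where r: "r = (c,u)" by (cases r)
  have "R (a*t) (b*s)" using h p q by (simp add: le_def)
  from Rmult[OF this, of "c*u"] have "R ((a*c)*(t*u)) ((b*c)*(s*u))" by (rule Rsubst) (simp_all add: ac_simps)
  then show ?thesis using p q r by (simp add: le_def mulp_def)
qed

lemma EE_mulp: "EE p p' \<Longrightarrow> q \<in> P \<Longrightarrow> EE (mulp p q) (mulp p' q)"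
  unfolding EE_def using le_mulp mulp_P by blast

lemma EE_mulp2: "EE p p' \<Longrightarrow> EE q q' \<Longrightarrow> EE (mulp p q) (mulp p' q')"
proof -
  assume e1: "EE p p'" and e2: "EE q q'"
  have "EE (mulp p q) (mulp p' q)" using EE_mulp[OF e1] e2 by (simp add: EE_def)
  moreover have "EE (mulp q p') (mulp q' p')" using EE_mulp[OF e2] e1 by (simp add: EE_def)
  ultimately show ?thesis using EE_trans mulp_comm by metis
qed

end



definition enc :: "'a \<times> 'a \<Rightarrow> ('a \<times> 'a) set set" where "enc p = {{p}}"
definition dec :: "('a \<times> 'a) set set \<Rightarrow> 'a \<times> 'a" where "dec X = (SOME p. X = {{p}})"
lemma dec_enc[simp]: "dec (enc p) = p" unfolding dec_def enc_def by (rule some_equality) auto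
lemma enc_inj: "enc p = enc q \<longleftrightarrow> p = q" by (simp add: enc_def)

context vd begin

definition cP where "cP = rep ` P"
lemma cP_P: "x \<in> cP \<Longrightarrow> x \<in> P" unfolding cP_def using rep_P by blast
lemma cP_rep: "x \<in> cP \<Longrightarrow> rep x = x" unfolding cP_def using rep_rep by blast
lemma rep_cP: "p \<in> P \<Longrightarrow> rep p \<in> cP" unfolding cP_def by blast

definition GR :: "('a \<times> 'a) set set ogroup" where
  "GR = \<lparr>gcar = enc ` cP, gadd = (\<lambda>X Y. enc (rep (mulp (dec X) (dec Y)))), gzero = enc (rep (1,1)),
         gneg = (\<lambda>X. enc (rep (prod.swap (dec X)))), gle = (\<lambda>X Y. le (dec X) (dec Y))\<rparr>"

lemma GR_car: "gcar GR = enc ` cP" by (simp add: GR_def)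
lemma GR_add: "gadd GR X Y = enc (rep (mulp (dec X) (dec Y)))" by (simp add: GR_def)
lemma GR_zero: "gzero GR = enc (rep (1,1))" by (simp add: GR_def)
lemma GR_neg: "gneg GR X = enc (rep (prod.swap (dec X)))" by (simp add: GR_def)
lemma GR_le: "gle GR X Y = le (dec X) (dec Y)" by (simp add: GR_def)

lemma one_P: "(1,1) \<in> P" by (simp add: P_iff nz_one)
lemma swap_P: "x \<in> P \<Longrightarrow> prod.swap x \<in> P" by (simp add: P_iff)

lemma assoc_rep: "x \<in> P \<Longrightarrow> y \<in> P \<Longrightarrow> z \<in> P \<Longrightarrow>
   rep (mulp (rep (mulp x y)) z) = rep (mulp x (rep (mulp y z)))"
proof -
  assume x: "x \<in> P" and y: "y \<in> P" and z: "z \<in> P"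
  have e1: "EE (mulp (rep (mulp x y)) z) (mulp (mulp x y) z)"
    by (rule EE_mulp2[OF EE_sym[OF rep[OF mulp_P[OF x y]]] EE_refl[OF z]])
  have e2: "EE (mulp x (mulp y z)) (mulp x (rep (mulp y z)))"
    by (rule EE_mulp2[OF EE_refl[OF x] rep[OF mulp_P[OF y z]]])
  have "EE (mulp (rep (mulp x y)) z) (mulp x (rep (mulp y z)))"
    using EE_trans[OF e1 e2[folded mulp_assoc]] .
  then show ?thesis by (rule rep_eq)
qed

lemma lzero_rep: "x \<in> cP \<Longrightarrow> rep (mulp (rep (1,1)) x) = x"
proof -
  assume x: "x \<in> cP"
  have "EE (mulp (rep (1,1)) x) (mulp (1,1) x)"
    by (rule EE_mulp2[OF EE_sym[OF rep[OF one_P]] EE_refl[OF cP_P[OF x]]])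
  moreover have "mulp (1,1) x = x" by (simp add: mulp_def)
  ultimately have "rep (mulp (rep (1,1)) x) = rep x" using rep_eq by simp
  then show ?thesis using cP_rep[OF x] by simp
qed

lemma linv_rep: "x \<in> P \<Longrightarrow> rep (mulp (rep (prod.swap x)) x) = rep (1,1)"
proof -
  assume x: "x \<in> P"
  have e1: "EE (mulp (rep (prod.swap x)) x) (mulp (prod.swap x) x)"
    by (rule EE_mulp2[OF EE_sym[OF rep[OF swap_P[OF x]]] EE_refl[OF x]])
  have l: "le (mulp (prod.swap x) x) (1,1)" "le (1,1) (mulp (prod.swap x) x)"
    unfolding le_def mulp_def by (simp_all add: mult.commute Rrefl)
  have e2: "EE (mulp (prod.swap x) x) (1,1)" using l mulp_P[OF swap_P[OF x] x] one_P by (simp add: EE_def)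
  show ?thesis using rep_eq[OF EE_trans[OF e1 e2]] .
qed

lemma OGR: "ordered_ab_group GR"
proof -
  have c1: "gzero GR \<in> gcar GR" unfolding GR_car GR_zero using rep_cP[OF one_P] by blast
  have c2: "\<forall>X\<in>gcar GR. \<forall>Y\<in>gcar GR. gadd GR X Y \<in> gcar GR"
    unfolding GR_car GR_add ball_simps(9) dec_enc using rep_cP mulp_P cP_P by blast
  have c3: "\<forall>X\<in>gcar GR. gneg GR X \<in> gcar GR"
    unfolding GR_car GR_neg ball_simps(9) dec_enc using rep_cP swap_P cP_P by blast
  have c4: "\<forall>X\<in>gcar GR. \<forall>Y\<in>gcar GR. \<forall>Z\<in>gcar GR. gadd GR (gadd GR X Y) Z = gadd GR X (gadd GR Y Z)"
    unfolding GR_car GR_add ball_simps(9) dec_enc using assoc_rep cP_P by simp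
  have c5: "\<forall>X\<in>gcar GR. \<forall>Y\<in>gcar GR. gadd GR X Y = gadd GR Y X"
    unfolding GR_car GR_add ball_simps(9) dec_enc using mulp_comm by simp
  have c6: "\<forall>X\<in>gcar GR. gadd GR (gzero GR) X = X"
    unfolding GR_car GR_add GR_zero ball_simps(9) dec_enc using lzero_rep by simp
  have c7: "\<forall>X\<in>gcar GR. gadd GR (gneg GR X) X = gzero GR"
    unfolding GR_car GR_add GR_zero GR_neg ball_simps(9) dec_enc using linv_rep cP_P by simp
  have c8: "\<forall>X\<in>gcar GR. gle GR X X"
    unfolding GR_car GR_le ball_simps(9) dec_enc using le_refl by simp
  have c9: "\<forall>X\<in>gcar GR. \<forall>Y\<in>gcar GR. \<forall>Z\<in>gcar GR. gle GR X Y \<longrightarrow> gle GR Y Z \<longrightarrow> gle GR X Z"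
    unfolding GR_car GR_le ball_simps(9) dec_enc
  proof (intro ballI impI)
    fix x y z assume "x \<in> cP" "y \<in> cP" "z \<in> cP" "le x y" "le y z"
    then show "le x z" using le_trans cP_P P_iff by blast
  qed
  have c10: "\<forall>X\<in>gcar GR. \<forall>Y\<in>gcar GR. gle GR X Y \<longrightarrow> gle GR Y X \<longrightarrow> X = Y"
    unfolding GR_car GR_le ball_simps(9) dec_enc
  proof (intro ballI impI)
    fix x y assume x: "x \<in> cP" and y: "y \<in> cP" and "le x y" "le y x"
    then have "EE x y" using cP_P by (simp add: EE_def)
    then have "rep x = rep y" by (rule rep_eq)
    then show "enc x = enc y" using cP_rep[OF x] cP_rep[OF y] by simp
  qed
  have c11: "\<forall>X\<in>gcar GR. \<forall>Y\<in>gcar GR. gle GR X Y \<or> gle GR Y X"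
    unfolding GR_car GR_le ball_simps(9) dec_enc le_def using Rtot by blast
  have c12: "\<forall>X\<in>gcar GR. \<forall>Y\<in>gcar GR. \<forall>Z\<in>gcar GR. gle GR X Y \<longrightarrow> gle GR (gadd GR X Z) (gadd GR Y Z)"
    unfolding GR_car GR_le GR_add ball_simps(9) dec_enc
  proof (intro ballI impI)
    fix x y z assume x: "x \<in> cP" and y: "y \<in> cP" and z: "z \<in> cP" and h: "le x y"
    have "le (mulp x z) (mulp y z)" using le_mulp[OF h] .
    then show "le (rep (mulp x z)) (rep (mulp y z))"
      using le_resp rep mulp_P cP_P x y z by blast
  qed
  show ?thesis unfolding ordered_ab_group_def
    by (intro conjI c1 c2 c3 c4 c5 c6 c7 c8 c9 c10 c11 c12)
qed

end



context vd begin

definition val :: "'a \<times> 'a \<Rightarrow> ('a \<times> 'a) set set option" where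
  "val p = (if R 0 (fst p) then None else Some (enc (rep p)))"
definition vR :: "'a \<Rightarrow> ('a \<times> 'a) set set option" where "vR a = val (a, 1)"
definition wR :: "('a \<times> 'a) set \<Rightarrow> ('a \<times> 'a) set set option" where "wR X = val (SOME p. p \<in> X)"

lemma inf_vR: "inf_set vR = IR" by (auto simp: inf_set_def vR_def val_def)

lemma val_None: "val p = None \<longleftrightarrow> R 0 (fst p)" by (simp add: val_def)
lemma val_Some: "nz (fst p) \<Longrightarrow> val p = Some (enc (rep p))" by (simp add: val_def)

lemma val_gi: "nz (snd p) \<Longrightarrow> in_gamma_inf GR (val p)"
proof (cases "R 0 (fst p)")
  case True then show ?thesis by (simp add: val_def in_gamma_inf_def)
next
  case False
  assume "nz (snd p)"
  then have "p \<in> P" using False by (simp add: P_iff)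
  then show ?thesis using False rep_cP by (simp add: val_def in_gamma_inf_def GR_car)
qed

lemma val_rel: "((a,s),(b,t)) \<in> frac_rel IR \<Longrightarrow> val (a,s) = val (b,t)"
proof -
  assume "((a,s),(b,t)) \<in> frac_rel IR"
  then have s: "nz s" and t: "nz t" and d: "R 0 (a*t - b*s)" by (simp_all add: frac_rel_def)
  have d': "R 0 (b*s - a*t)" using Rneg[OF d] by (simp only: minus_diff_eq)
  have r1: "R (a*t) (b*s)" using Requiv[OF d] .
  have r2: "R (b*s) (a*t)" using Requiv[OF d'] .
  show ?thesis
  proof (cases "R 0 a")
    case True
    have "R 0 (a*t)" using Rmult[OF True, of t] by simp
    then have "R (0*s) (b*s)" using Rtrans[OF _ r1] by simp
    then have "R 0 b" using Rcanc[OF s] by blast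
    then show ?thesis using True by (simp add: val_def)
  next
    case False
    have nb: "nz b"
    proof
      assume "R 0 b"
      have "R 0 (b*s)" using Rmult[OF \<open>R 0 b\<close>, of s] by simp
      then have "R (0*t) (a*t)" using Rtrans[OF _ r2] by simp
      then show False using Rcanc[OF t] False by blast
    qed
    have "EE (a,s) (b,t)" using False nb s t r1 r2 by (simp add: EE_def P_iff le_def)
    then show ?thesis using rep_eq False nb by (simp add: val_def)
  qed
qed

lemma wR_frac: "nz s \<Longrightarrow> wR (frac IR a s) = val (a,s)"
proof -
  assume s: "nz s"
  have "(a,s) \<in> frac IR a s" using frac_self[OF PI] s by simp
  then have "(SOME p. p \<in> frac IR a s) \<in> frac IR a s" by (rule someI)
  then obtain b t where bt: "(SOME p. p \<in> frac IR a s) = (b,t)" "((a,s),(b,t)) \<in> frac_rel IR"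
    by (metis frac_def Image_singleton_iff surj_pair)
  show ?thesis unfolding wR_def bt(1) using val_rel[OF bt(2)] by simp
qed

lemma val_mult: "nz s \<Longrightarrow> nz t \<Longrightarrow> val (a*b, s*t) = vadd GR (val (a,s)) (val (b,t))"
proof (cases "R 0 a \<or> R 0 b")
  case True
  then have "R 0 (a*b)" using Rmult[of 0 a b] Rmultl[of 0 b a] by auto
  then show ?thesis using True by (auto simp: val_def vadd_def)
next
  case False
  assume s: "nz s" and t: "nz t"
  have ab: "nz (a*b)" using False nz_mult by blast
  have pa: "(a,s) \<in> P" "(b,t) \<in> P" using False s t by (simp_all add: P_iff)
  have "EE (mulp (rep (a,s)) (rep (b,t))) (mulp (a,s) (b,t))"
    by (rule EE_mulp2[OF EE_sym[OF rep[OF pa(1)]] EE_sym[OF rep[OF pa(2)]]])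
  then have "rep (mulp (rep (a,s)) (rep (b,t))) = rep (a*b, s*t)" using rep_eq by (simp add: mulp_def)
  then show ?thesis using False ab by (simp add: val_def vadd_def GR_add)
qed

lemma key: "nz a \<Longrightarrow> nz s \<Longrightarrow> nz t \<Longrightarrow> R (a*t) (b*s) \<Longrightarrow> nz (a*t + b*s) \<Longrightarrow>
    vle GR (val (a,s)) (val (a*t + b*s, s*t))"
proof -
  assume a: "nz a" and s: "nz s" and t: "nz t" and h: "R (a*t) (b*s)" and n: "nz (a*t + b*s)"
  have "R ((a*t)*s) ((a*t)*s + (b*s)*s)" using Radd[OF Rrefl Rmult[OF h, of s]] .
  then have "le (a,s) (a*t + b*s, s*t)" unfolding le_def by (rule Rsubst) (simp_all add: algebra_simps)
  moreover have "(a,s) \<in> P" "(a*t + b*s, s*t) \<in> P" using a s t n nz_mult by (simp_all add: P_iff)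
  ultimately have "le (rep (a,s)) (rep (a*t + b*s, s*t))" using le_resp rep by blast
  then show ?thesis using a n by (simp add: val_def vle_def GR_le)
qed

lemma val_add: "nz s \<Longrightarrow> nz t \<Longrightarrow> vle GR (vmin GR (val (a,s)) (val (b,t))) (val (a*t + b*s, s*t))"
proof -
  assume s: "nz s" and t: "nz t"
  show ?thesis
  proof (cases "R 0 (a*t + b*s)")
    case True then show ?thesis by (simp add: val_def vle_def)
  next
    case False
    have sym: "(b*s + a*t, t*s) = (a*t + b*s, s*t)" by (simp add: ac_simps)
    consider "R 0 a" "R 0 b" | "R 0 a" "nz b" | "nz a" "R 0 b" | "nz a" "nz b" by blast
    then show ?thesis
    proof cases
      case 1
      have "R 0 (a*t)" "R 0 (b*s)" using Rmult[OF 1(1), of t] Rmult[OF 1(2), of s] by simp_all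
      then have "R 0 (a*t + b*s)" by (rule Radd)
      then show ?thesis using False by simp
    next
      case 2
      have "R 0 (a*t)" using Rmult[OF 2(1), of t] by simp
      then have "R (b*s) (a*t)" by (rule RI)
      moreover have n': "nz (b*s + a*t)" using False by (simp add: add.commute)
      ultimately have "vle GR (val (b,t)) (val (b*s + a*t, t*s))" using key[OF 2(2) t s] by blast
      then show ?thesis using 2 by (simp add: vmin_def val_def vle_def sym)
    next
      case 3
      have "R 0 (b*s)" using Rmult[OF 3(2), of s] by simp
      then have "R (a*t) (b*s)" by (rule RI)
      then have "vle GR (val (a,s)) (val (a*t + b*s, s*t))" using key[OF 3(1) s t] False by simp
      then show ?thesis using 3 by (simp add: vmin_def val_def vle_def)
    next
      case 4
      have pa: "(a,s) \<in> P" "(b,t) \<in> P" using 4 s t by (simp_all add: P_iff)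
      have iff: "vle GR (val (a,s)) (val (b,t)) \<longleftrightarrow> R (a*t) (b*s)"
      proof -
        have "vle GR (val (a,s)) (val (b,t)) \<longleftrightarrow> le (rep (a,s)) (rep (b,t))"
          using 4 by (simp add: val_def vle_def GR_le)
        also have "\<dots> \<longleftrightarrow> le (a,s) (b,t)" using le_resp_iff[OF rep[OF pa(1)] rep[OF pa(2)]] by simp
        finally show ?thesis by (simp add: le_def)
      qed
      show ?thesis
      proof (cases "R (a*t) (b*s)")
        case True
        then have "vle GR (val (a,s)) (val (a*t + b*s, s*t))" using key[OF 4(1) s t] False by simp
        then show ?thesis using iff True by (simp add: vmin_def)
      next
        case nT: False
        then have "R (b*s) (a*t)" using Rtot by blast
        moreover have n': "nz (b*s + a*t)" using False by (simp add: add.commute)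
        ultimately have "vle GR (val (b,t)) (val (b*s + a*t, t*s))" using key[OF 4(2) t s] by blast
        then show ?thesis using iff nT sym by (simp add: vmin_def)
      qed
    qed
  qed
qed

lemma FVR: "frac_field_valuation IR GR wR"
  unfolding frac_field_valuation_def
proof (intro conjI ballI)
  fix X assume "X \<in> frac_field IR"
  then obtain a s where s: "s \<notin> IR" and X: "X = frac IR a s" using frac_fieldE[OF PI] by blast
  show "in_gamma_inf GR (wR X)" using X wR_frac val_gi s by simp
  have "frac IR a s = frac IR 0 1 \<longleftrightarrow> a * 1 - 0 * s \<in> IR" using frac_eq[OF PI] s nz_one by simp
  then show "wR X = None \<longleftrightarrow> X = frac IR 0 1" using X wR_frac s val_None by simp
next
  fix X Y assume "X \<in> frac_field IR" "Y \<in> frac_field IR"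
  then obtain a s b t where s: "s \<notin> IR" and X: "X = frac IR a s" and t: "t \<notin> IR" and Y: "Y = frac IR b t"
    using frac_fieldE[OF PI] by metis
  have st: "s*t \<notin> IR" using nz_mult s t by simp
  show "wR (frac_mult IR X Y) = vadd GR (wR X) (wR Y)"
    using X Y frac_mult_eq[OF PI s t] wR_frac s t st val_mult by simp
  show "vle GR (vmin GR (wR X) (wR Y)) (wR (frac_add IR X Y))"
    using X Y frac_add_eq[OF PI s t] wR_frac s t st val_add by simp
qed

lemma BV: "bourbaki_valuation GR vR"
  unfolding bourbaki_valuation_def
proof (intro conjI allI exI)
  show "ordered_ab_group GR" by (rule OGR)
  fix a show "in_gamma_inf GR (vR a)" unfolding vR_def by (rule val_gi) (simp add: nz_one)
next
  show "prime_ideal (inf_set vR)" using PI inf_vR by simp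
  show "induced_field_valuation GR vR wR" unfolding induced_field_valuation_def inf_vR
    using FVR wR_frac[OF nz_one] by (simp add: vR_def)
qed

lemma VDR: "val_div GR vR = R"
proof (intro ext)
  fix a b
  show "val_div GR vR a b = R a b"
  proof (cases "R 0 a")
    case True
    have "R a 0" using Requiv[of a 0] True by simp
    then have "R a b \<longleftrightarrow> R 0 b" using Rtrans True by blast
    then show ?thesis using True by (simp add: val_div_def vR_def val_def vle_def split: option.split)
  next
    case False
    show ?thesis
    proof (cases "R 0 b")
      case True
      then show ?thesis using RI[OF True] False by (simp add: val_div_def vR_def val_def vle_def)
    next
      case nb: False
      have pa: "(a,1) \<in> P" "(b,1) \<in> P" using False nb by (simp_all add: P_iff nz_one)
      have "val_div GR vR a b \<longleftrightarrow> le (rep (a,1)) (rep (b,1))"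
        using False nb by (simp add: val_div_def vR_def val_def vle_def GR_le)
      also have "\<dots> \<longleftrightarrow> le (a,1) (b,1)" using le_resp_iff[OF rep[OF pa(1)] rep[OF pa(2)]] by simp
      finally show ?thesis by (simp add: le_def)
    qed
  qed
qed

end

theorem theorem3p1:
  assumes "(1::'a::comm_ring_1) \<noteq> 0"
  shows
    "(\<forall>(G :: 'g ogroup) (v :: 'a \<Rightarrow> 'g option). bourbaki_valuation G v \<longrightarrow>
        valuation_divisibility (val_div G v) \<and> div_support (val_div G v) = inf_set v) \<and>
     (\<forall>(G1 :: 'g ogroup) (v1 :: 'a \<Rightarrow> 'g option) (G2 :: 'h ogroup) (v2 :: 'a \<Rightarrow> 'h option).
        bourbaki_valuation G1 v1 \<longrightarrow> bourbaki_valuation G2 v2 \<longrightarrow>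
        (val_div G1 v1 = val_div G2 v2 \<longleftrightarrow> bourbaki_equiv G1 v1 G2 v2)) \<and>
     (\<forall>R :: 'a \<Rightarrow> 'a \<Rightarrow> bool. valuation_divisibility R \<longrightarrow>
        (\<exists>(G :: ('a \<times> 'a) set set ogroup) (v :: 'a \<Rightarrow> ('a \<times> 'a) set set option).
           bourbaki_valuation G v \<and> val_div G v = R))"
proof -
  have p1: "\<forall>(G :: 'g ogroup) (v :: 'a \<Rightarrow> 'g option). bourbaki_valuation G v \<longrightarrow>
        valuation_divisibility (val_div G v) \<and> div_support (val_div G v) = inf_set v"
  proof (intro allI impI)
    fix G :: "'g ogroup" and v :: "'a \<Rightarrow> 'g option"
    assume "bourbaki_valuation G v"
    then obtain w where "bv G v w" using bv_ex by blast
    then show "valuation_divisibility (val_div G v) \<and> div_support (val_div G v) = inf_set v"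
      by (rule bv.valdiv)
  qed
  have p2: "\<forall>(G1 :: 'g ogroup) (v1 :: 'a \<Rightarrow> 'g option) (G2 :: 'h ogroup) (v2 :: 'a \<Rightarrow> 'h option).
        bourbaki_valuation G1 v1 \<longrightarrow> bourbaki_valuation G2 v2 \<longrightarrow>
        (val_div G1 v1 = val_div G2 v2 \<longleftrightarrow> bourbaki_equiv G1 v1 G2 v2)"
    using part2 by blast
  have p3: "\<forall>R :: 'a \<Rightarrow> 'a \<Rightarrow> bool. valuation_divisibility R \<longrightarrow>
        (\<exists>(G :: ('a \<times> 'a) set set ogroup) (v :: 'a \<Rightarrow> ('a \<times> 'a) set set option).
           bourbaki_valuation G v \<and> val_div G v = R)"
  proof (intro allI impI)
    fix R :: "'a \<Rightarrow> 'a \<Rightarrow> bool"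
    assume "valuation_divisibility R"
    then interpret vd R by (rule vd.intro)
    show "\<exists>(G :: ('a \<times> 'a) set set ogroup) (v :: 'a \<Rightarrow> ('a \<times> 'a) set set option).
           bourbaki_valuation G v \<and> val_div G v = R"
      using BV VDR by blast
  qed
  show ?thesis using p1 p2 p3 by blast
qed

end
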